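(* Consider the system on the projected Kasner state space in the context and a solution with $\Sigma_A\Sigma_C\neq0$ initially. Then its $\alpha$-limit set is contained in the closed arc $\{\Sigma_A=\Sigma_C=0,\ \Sigma_+^2+\Sigma_B^2=1,\ -1\le\Sigma_+\le-\tfrac12,\ 0\le\Sigma_B\le\tfrac{\sqrt3}{2}\}$, and its $\omega$-limit set is contained in the closed arc $\{\Sigma_A=\Sigma_C=0,\ \Sigma_+^2+\Sigma_B^2=1,\ \tfrac12\le\Sigma_+\le1,\ -\tfrac{\sqrt3}{2}\le\Sigma_B\le0\}$.
   Context: The projected Kasner system is the ODE system for $(\Sigma_+,\Sigma_A,\Sigma_B,\Sigma_C)\in\mathbb R^4$ restricted to the invariant sphere $\Sigma_+^2+\Sigma_A^2+\Sigma_B^2+\Sigma_C^2=1$: $\Sigma_+'=3\Sigma_A^2$, $\Sigma_A'=-(3\Sigma_++\sqrt3\Sigma_B)\Sigma_A$, $\Sigma_B'=\sqrt3\Sigma_A^2-2\sqrt3\Sigma_C^2$, $\Sigma_C'=2\sqrt3\Sigma_B\Sigma_C$, where $'$ denotes $d/d\tau$, $\tau\in\mathbb R$. *)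

theory Defs
  imports "HOL-Analysis.Analysis"
begin

type_synonym state = "real \<times> real \<times> real \<times> real"
  (* (Sigma_+, Sigma_A, Sigma_B, Sigma_C) *)

definition kasner_solution ::
  "(real \<Rightarrow> real) \<Rightarrow> (real \<Rightarrow> real) \<Rightarrow> (real \<Rightarrow> real) \<Rightarrow> (real \<Rightarrow> real) \<Rightarrow> bool" where
  "kasner_solution Sp SA SB SC \<longleftrightarrow>
     (\<forall>t. (Sp has_real_derivative 3 * (SA t)\<^sup>2) (at t)
        \<and> (SA has_real_derivative - (3 * Sp t + sqrt 3 * SB t) * SA t) (at t)
        \<and> (SB has_real_derivative sqrt 3 * (SA t)\<^sup>2 - 2 * sqrt 3 * (SC t)\<^sup>2) (at t)
        \<and> (SC has_real_derivative 2 * sqrt 3 * SB t * SC t) (at t))"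

definition omega_limit :: "(real \<Rightarrow> 'a::metric_space) \<Rightarrow> 'a set" where
  "omega_limit x = {p. \<exists>s::nat \<Rightarrow> real. filterlim s at_top sequentially \<and> (\<lambda>n. x (s n)) \<longlonglongrightarrow> p}"

definition alpha_limit :: "(real \<Rightarrow> 'a::metric_space) \<Rightarrow> 'a set" where
  "alpha_limit x = {p. \<exists>s::nat \<Rightarrow> real. filterlim s at_bot sequentially \<and> (\<lambda>n. x (s n)) \<longlonglongrightarrow> p}"

definition alpha_arc :: "state set" where
  "alpha_arc = {(sp, sa, sb, sc). sa = 0 \<and> sc = 0 \<and> sp\<^sup>2 + sb\<^sup>2 = 1
      \<and> -1 \<le> sp \<and> sp \<le> -1/2 \<and> 0 \<le> sb \<and> sb \<le> sqrt 3 / 2}"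

definition omega_arc :: "state set" where
  "omega_arc = {(sp, sa, sb, sc). sa = 0 \<and> sc = 0 \<and> sp\<^sup>2 + sb\<^sup>2 = 1
      \<and> 1/2 \<le> sp \<and> sp \<le> 1 \<and> - (sqrt 3 / 2) \<le> sb \<and> sb \<le> 0}"

end

theory Submission
  imports Defs
begin

lemma mono_conv:
  fixes f :: "real \<Rightarrow> real"
  assumes mono: "\<And>s t. s \<le> t \<Longrightarrow> f s \<le> f t" and bd: "\<And>t. f t \<le> B"
  shows "\<exists>a. (f \<longlongrightarrow> a) at_top"
proof
  have bdd: "bdd_above (range f)" using bd by (auto intro!: bdd_aboveI[where M=B])
  show "(f \<longlongrightarrow> Sup (range f)) at_top"
  proof (rule increasing_tendsto)
    show "\<forall>\<^sub>F n in at_top. f n \<le> Sup (range f)"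
      using bdd by (auto intro!: always_eventually cSUP_upper)
  next
    fix x assume "x < Sup (range f)"
    then obtain t where "x < f t" using bdd by (meson less_cSUP_iff UNIV_I UNIV_not_empty)
    then show "\<forall>\<^sub>F n in at_top. x < f n"
      unfolding eventually_at_top_linorder using mono by (meson order_less_le_trans)
  qed
qed

lemma barbalat:
  fixes F u u' :: "real \<Rightarrow> real"
  assumes dF: "\<And>t. (F has_real_derivative u t) (at t)"
    and du: "\<And>t. (u has_real_derivative u' t) (at t)"
    and bM: "\<And>t. \<bar>u' t\<bar> \<le> M"
    and pos: "\<And>t. 0 \<le> u t"
    and lim: "(F \<longlongrightarrow> a) at_top"
  shows "(u \<longlongrightarrow> 0) at_top"
proof (rule order_tendstoI)
  fix e :: real assume "e < 0"
  then show "\<forall>\<^sub>F x in at_top. e < u x" using pos by (intro always_eventually allI) (meson order_less_le_trans)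
next
  fix e :: real assume e: "0 < e"
  have M0: "0 \<le> M" using bM[of 0] by linarith
  define d where "d = e / (2 * (M + 1))"
  have d: "0 < d" using e M0 by (simp add: d_def)
  have Md: "M * d < e / 2"
  proof -
    have "M * d = e * (M / (2*(M+1)))" by (simp add: d_def)
    also have "\<dots> < e * (1/2)" using e M0 by (intro mult_strict_left_mono) (auto simp: field_simps)
    finally show ?thesis by simp
  qed
  define h where "h = e * d / 4"
  have h: "0 < h" using e d by (simp add: h_def)
  from lim h have "\<forall>\<^sub>F t in at_top. dist (F t) a < h" by (rule tendstoD)
  then obtain T where T: "\<And>t. t \<ge> T \<Longrightarrow> \<bar>F t - a\<bar> < h"
    unfolding eventually_at_top_linorder dist_real_def by blast
  show "\<forall>\<^sub>F t in at_top. u t < e"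
    unfolding eventually_at_top_linorder
  proof (intro exI allI impI)
    fix t assume tT: "t \<ge> T"
    show "u t < e"
    proof (rule ccontr)
      assume "\<not> u t < e" hence ut: "u t \<ge> e" by simp
      have low: "u s \<ge> e/2" if "t \<le> s" "s \<le> t + d" for s
      proof (cases "s = t")
        case True thus ?thesis using ut e by simp
      next
        case False
        hence "t < s" using that by simp
        from MVT2[OF this, of u u'] du obtain z where "u s - u t = (s - t) * u' z" by blast
        hence "\<bar>u s - u t\<bar> = (s - t) * \<bar>u' z\<bar>" using \<open>t < s\<close> by (simp add: abs_mult)
        also have "\<dots> \<le> d * M" using that bM[of z] M0 \<open>t<s\<close>
          by (intro mult_mono) auto
        finally show ?thesis using Md ut by (simp add: mult.commute)
      qed
      have "t < t + d" using d by simp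
      from MVT2[OF this, of F u] dF obtain z where z: "t < z" "z < t + d"
        "F (t + d) - F t = (t + d - t) * u z" by blast
      have "u z \<ge> e/2" using low z by simp
      hence "F (t + d) - F t \<ge> d * (e/2)" using z d by (simp add: mult_left_mono)
      moreover have "\<bar>F (t + d) - a\<bar> < h" "\<bar>F t - a\<bar> < h" using T tT d by auto
      moreover have "d * (e/2) = 2 * (e * d / 4)" by simp
      ultimately show False unfolding h_def by linarith
    qed
  qed
qed

lemma absA: "\<bar>2 * x * (- L * x)\<bar> = 2 * (\<bar>L\<bar> * x\<^sup>2)" for x L :: real
  by (simp add: abs_mult power2_eq_square)

lemma absC: "0 \<le> s \<Longrightarrow> \<bar>2 * x * (2 * s * B * x)\<bar> = 4 * (s * (\<bar>B\<bar> * x\<^sup>2))" for x s B :: real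
  by (simp add: abs_mult power2_eq_square)

lemma sqrt3_le2: "sqrt 3 \<le> (2::real)"
  by (rule real_le_lsqrt) auto

lemma omega_part:
  fixes Sp SA SB SC :: "real \<Rightarrow> real"
  assumes sol: "kasner_solution Sp SA SB SC"
    and sphere: "(Sp 0)\<^sup>2 + (SA 0)\<^sup>2 + (SB 0)\<^sup>2 + (SC 0)\<^sup>2 = 1"
    and init: "SA 0 * SC 0 \<noteq> 0"
  shows "omega_limit (\<lambda>t. (Sp t, SA t, SB t, SC t)) \<subseteq> omega_arc"
proof -
  note d = sol[unfolded kasner_solution_def, rule_format]
  have dP: "\<And>t. (Sp has_real_derivative 3 * (SA t)\<^sup>2) (at t)" using d by blast
  have dA: "\<And>t. (SA has_real_derivative - (3 * Sp t + sqrt 3 * SB t) * SA t) (at t)" using d by blast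
  have dB: "\<And>t. (SB has_real_derivative sqrt 3 * (SA t)\<^sup>2 - 2 * sqrt 3 * (SC t)\<^sup>2) (at t)" using d by blast
  have dC: "\<And>t. (SC has_real_derivative 2 * sqrt 3 * SB t * SC t) (at t)" using d by blast
  have s3: "sqrt 3 * sqrt 3 = (3::real)" by simp
  have s33: "\<And>x. sqrt 3 * (sqrt 3 * x) = (3::real) * x" by (simp add: mult.assoc[symmetric])
  have dP': "\<And>t D. D = 3 * (SA t)\<^sup>2 \<Longrightarrow> (Sp has_real_derivative D) (at t)" using dP by simp
  have dA': "\<And>t D. D = - (3 * Sp t + sqrt 3 * SB t) * SA t \<Longrightarrow> (SA has_real_derivative D) (at t)" using dA by simp
  have dB': "\<And>t D. D = sqrt 3 * (SA t)\<^sup>2 - 2 * sqrt 3 * (SC t)\<^sup>2 \<Longrightarrow> (SB has_real_derivative D) (at t)" using dB by simp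
  have dC': "\<And>t D. D = 2 * sqrt 3 * SB t * SC t \<Longrightarrow> (SC has_real_derivative D) (at t)" using dC by simp
  define V where "V t = (Sp t)\<^sup>2 + (SA t)\<^sup>2 + (SB t)\<^sup>2 + (SC t)\<^sup>2" for t
  have dV: "\<forall>t. (V has_real_derivative 0) (at t)"
  proof
    fix t
    have "(V has_real_derivative 2 * Sp t * (3 * (SA t)\<^sup>2) + 2 * SA t * (- (3 * Sp t + sqrt 3 * SB t) * SA t)
       + 2 * SB t * (sqrt 3 * (SA t)\<^sup>2 - 2 * sqrt 3 * (SC t)\<^sup>2) + 2 * SC t * (2 * sqrt 3 * SB t * SC t)) (at t)"
      unfolding V_def[abs_def]
      by (intro derivative_eq_intros dP' dA' dB' dC') (auto simp: power2_eq_square)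
    moreover have "2 * Sp t * (3 * (SA t)\<^sup>2) + 2 * SA t * (- (3 * Sp t + sqrt 3 * SB t) * SA t)
       + 2 * SB t * (sqrt 3 * (SA t)\<^sup>2 - 2 * sqrt 3 * (SC t)\<^sup>2) + 2 * SC t * (2 * sqrt 3 * SB t * SC t) = 0"
      by (simp add: power2_eq_square algebra_simps)
    ultimately show "(V has_real_derivative 0) (at t)" by simp
  qed
  have sph: "\<And>t. (Sp t)\<^sup>2 + (SA t)\<^sup>2 + (SB t)\<^sup>2 + (SC t)\<^sup>2 = 1"
    using DERIV_isconst_all[OF dV] sphere unfolding V_def by metis
  have bP: "\<bar>Sp t\<bar> \<le> 1" and bB: "\<bar>SB t\<bar> \<le> 1" and bA2: "(SA t)\<^sup>2 \<le> 1" and bC2: "(SC t)\<^sup>2 \<le> 1" for t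
  proof -
    have "(Sp t)\<^sup>2 \<le> 1" "(SB t)\<^sup>2 \<le> 1" "(SA t)\<^sup>2 \<le> 1" "(SC t)\<^sup>2 \<le> 1"
      using sph[of t] by (smt (verit) zero_le_power2)+
    thus "\<bar>Sp t\<bar> \<le> 1" "\<bar>SB t\<bar> \<le> 1" "(SA t)\<^sup>2 \<le> 1" "(SC t)\<^sup>2 \<le> 1"
      by (auto simp: abs_square_le_1)
  qed
  have bL: "\<bar>3 * Sp t + sqrt 3 * SB t\<bar> \<le> 5" for t
  proof -
    have "\<bar>sqrt 3 * SB t\<bar> \<le> 2 * 1" unfolding abs_mult using sqrt3_le2 bB[of t]
      by (intro mult_mono) auto
    thus ?thesis using bP[of t] by linarith
  qed
  define G where "G t = Sp t - sqrt 3 * SB t" for t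
  have dG: "\<And>t. (G has_real_derivative 6 * (SC t)\<^sup>2) (at t)"
  proof -
    fix t
    have "(G has_real_derivative 3 * (SA t)\<^sup>2 - sqrt 3 * (sqrt 3 * (SA t)\<^sup>2 - 2 * sqrt 3 * (SC t)\<^sup>2)) (at t)"
      unfolding G_def[abs_def] by (intro derivative_eq_intros dP' dB') auto
    moreover have "3 * (SA t)\<^sup>2 - sqrt 3 * (sqrt 3 * (SA t)\<^sup>2 - 2 * sqrt 3 * (SC t)\<^sup>2) = 6 * (SC t)\<^sup>2"
      by (simp add: right_diff_distrib s33)
    ultimately show "(G has_real_derivative 6 * (SC t)\<^sup>2) (at t)" by simp
  qed
  have monoP: "Sp s \<le> Sp t" if "s \<le> t" for s t
    by (rule DERIV_nonneg_imp_nondecreasing[OF that]) (use dP in \<open>auto intro!: exI[of _ "3 * (SA _)\<^sup>2"]\<close>)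
  have monoG: "G s \<le> G t" if "s \<le> t" for s t
    by (rule DERIV_nonneg_imp_nondecreasing[OF that]) (use dG in \<open>auto intro!: exI[of _ "6 * (SC _)\<^sup>2"]\<close>)
  have bG: "G t \<le> 3" for t
  proof -
    have "\<bar>sqrt 3 * SB t\<bar> \<le> 2 * 1" unfolding abs_mult using sqrt3_le2 bB[of t]
      by (intro mult_mono) auto
    thus ?thesis using bP[of t] unfolding G_def by linarith
  qed
  have "\<exists>a. (Sp \<longlongrightarrow> a) at_top" by (rule mono_conv[where B=1]) (use monoP bP in \<open>auto simp: abs_le_iff\<close>)
  then obtain a where la: "(Sp \<longlongrightarrow> a) at_top" by blast
  have "\<exists>b. (G \<longlongrightarrow> b) at_top" by (rule mono_conv[where B=3]) (use monoG bG in auto)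
  then obtain b where lb: "(G \<longlongrightarrow> b) at_top" by blast
  define c where "c = (a - b) / sqrt 3"
  have lc: "(SB \<longlongrightarrow> c) at_top"
  proof -
    have "((\<lambda>t. (Sp t - G t) / sqrt 3) \<longlongrightarrow> (a - b) / sqrt 3) at_top"
      by (intro tendsto_intros la lb) auto
    moreover have "(\<lambda>t. (Sp t - G t) / sqrt 3) = SB" by (auto simp: G_def)
    ultimately show ?thesis by (simp add: c_def)
  qed
  have lA2: "((\<lambda>t. (SA t)\<^sup>2) \<longlongrightarrow> 0) at_top"
  proof (rule barbalat[where F="\<lambda>t. Sp t / 3" and u'="\<lambda>t. 2 * SA t * (- (3 * Sp t + sqrt 3 * SB t) * SA t)" and M=10])
    show "((\<lambda>t. Sp t / 3) has_real_derivative (SA t)\<^sup>2) (at t)" for t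
      using DERIV_cdivide[OF dP[of t], of 3] by simp
    show "((\<lambda>t. (SA t)\<^sup>2) has_real_derivative 2 * SA t * (- (3 * Sp t + sqrt 3 * SB t) * SA t)) (at t)" for t
      by (intro derivative_eq_intros dA') auto
    show "\<bar>2 * SA t * (- (3 * Sp t + sqrt 3 * SB t) * SA t)\<bar> \<le> 10" for t
    proof -
      have "\<bar>2 * SA t * (- (3 * Sp t + sqrt 3 * SB t) * SA t)\<bar> = 2 * (\<bar>3 * Sp t + sqrt 3 * SB t\<bar> * (SA t)\<^sup>2)"
        by (rule absA)
      also have "\<dots> \<le> 2 * (5 * 1)" using bL[of t] bA2[of t] by (intro mult_left_mono mult_mono) auto
      finally show ?thesis by simp
    qed
    show "((\<lambda>t. Sp t / 3) \<longlongrightarrow> a / 3) at_top" by (intro tendsto_intros la) auto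
  qed auto
  have lC2: "((\<lambda>t. (SC t)\<^sup>2) \<longlongrightarrow> 0) at_top"
  proof (rule barbalat[where F="\<lambda>t. G t / 6" and u'="\<lambda>t. 2 * SC t * (2 * sqrt 3 * SB t * SC t)" and M=8])
    show "((\<lambda>t. G t / 6) has_real_derivative (SC t)\<^sup>2) (at t)" for t
      using DERIV_cdivide[OF dG[of t], of 6] by simp
    show "((\<lambda>t. (SC t)\<^sup>2) has_real_derivative 2 * SC t * (2 * sqrt 3 * SB t * SC t)) (at t)" for t
      by (intro derivative_eq_intros dC') auto
    show "\<bar>2 * SC t * (2 * sqrt 3 * SB t * SC t)\<bar> \<le> 8" for t
    proof -
      have "\<bar>2 * SC t * (2 * sqrt 3 * SB t * SC t)\<bar> = 4 * (sqrt 3 * (\<bar>SB t\<bar> * (SC t)\<^sup>2))"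
        by (rule absC) simp
      also have "\<dots> \<le> 4 * (2 * (1 * 1))" using bB[of t] bC2[of t] sqrt3_le2
        by (intro mult_left_mono mult_mono) auto
      finally show ?thesis by simp
    qed
    show "((\<lambda>t. G t / 6) \<longlongrightarrow> b / 6) at_top" by (intro tendsto_intros lb) auto
  qed auto
  have lA: "(SA \<longlongrightarrow> 0) at_top"
  proof -
    have "((\<lambda>t. sqrt ((SA t)\<^sup>2)) \<longlongrightarrow> sqrt 0) at_top" by (intro tendsto_intros lA2)
    hence "((\<lambda>t. \<bar>SA t\<bar>) \<longlongrightarrow> 0) at_top" by simp
    thus ?thesis by (simp add: tendsto_rabs_zero_iff)
  qed
  have lC: "(SC \<longlongrightarrow> 0) at_top"
  proof -
    have "((\<lambda>t. sqrt ((SC t)\<^sup>2)) \<longlongrightarrow> sqrt 0) at_top" by (intro tendsto_intros lC2)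
    hence "((\<lambda>t. \<bar>SC t\<bar>) \<longlongrightarrow> 0) at_top" by simp
    thus ?thesis by (simp add: tendsto_rabs_zero_iff)
  qed
  have circ: "a\<^sup>2 + c\<^sup>2 = 1"
  proof -
    have "((\<lambda>t. (Sp t)\<^sup>2 + (SA t)\<^sup>2 + (SB t)\<^sup>2 + (SC t)\<^sup>2) \<longlongrightarrow> a\<^sup>2 + 0\<^sup>2 + c\<^sup>2 + 0\<^sup>2) at_top"
      by (intro tendsto_intros la lA lc lC)
    hence "((\<lambda>t::real. 1::real) \<longlongrightarrow> a\<^sup>2 + c\<^sup>2) at_top" by (simp add: sph)
    thus ?thesis by (simp add: tendsto_const_iff)
  qed
  have nzC: "(SC t)\<^sup>2 > 0" if "t \<ge> 0" for t
  proof -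
    define h where "h t = (SC t)\<^sup>2 * exp (8 * t)" for t
    have "h 0 \<le> h t"
    proof (rule DERIV_nonneg_imp_nondecreasing[OF that])
      fix x
      have "(h has_real_derivative 2 * SC x * (2 * sqrt 3 * SB x * SC x) * exp (8*x) + (SC x)\<^sup>2 * (exp (8*x) * 8)) (at x)"
        unfolding h_def[abs_def] by (intro derivative_eq_intros dC') auto
      moreover have "2 * SC x * (2 * sqrt 3 * SB x * SC x) * exp (8*x) + (SC x)\<^sup>2 * (exp (8*x) * 8)
          = ((SC x)\<^sup>2 * exp (8*x)) * (4 * (sqrt 3 * SB x) + 8)"
        by (simp add: algebra_simps power2_eq_square)
      moreover have "\<bar>sqrt 3 * SB x\<bar> \<le> 2 * 1" unfolding abs_mult using sqrt3_le2 bB[of x]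
        by (intro mult_mono) auto
      hence "0 \<le> ((SC x)\<^sup>2 * exp (8*x)) * (4 * (sqrt 3 * SB x) + 8)" by (intro mult_nonneg_nonneg) auto
      ultimately show "\<exists>y. (h has_real_derivative y) (at x) \<and> 0 \<le> y" by auto
    qed
    moreover have "h 0 > 0" using init by (simp add: h_def)
    ultimately have "h t > 0" by linarith
    thus ?thesis unfolding h_def by (simp add: zero_less_mult_iff)
  qed
  have nzA: "(SA t)\<^sup>2 > 0" if "t \<ge> 0" for t
  proof -
    define h where "h t = (SA t)\<^sup>2 * exp (10 * t)" for t
    have "h 0 \<le> h t"
    proof (rule DERIV_nonneg_imp_nondecreasing[OF that])
      fix x
      have "(h has_real_derivative 2 * SA x * (- (3 * Sp x + sqrt 3 * SB x) * SA x) * exp (10*x) + (SA x)\<^sup>2 * (exp (10*x) * 10)) (at x)"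
        unfolding h_def[abs_def] by (intro derivative_eq_intros dA') auto
      moreover have "2 * SA x * (- (3 * Sp x + sqrt 3 * SB x) * SA x) * exp (10*x) + (SA x)\<^sup>2 * (exp (10*x) * 10)
          = ((SA x)\<^sup>2 * exp (10*x)) * (10 - 2 * (3 * Sp x + sqrt 3 * SB x))"
        by (simp add: algebra_simps power2_eq_square)
      moreover have "0 \<le> ((SA x)\<^sup>2 * exp (10*x)) * (10 - 2 * (3 * Sp x + sqrt 3 * SB x))"
        using bL[of x] by (intro mult_nonneg_nonneg) auto
      ultimately show "\<exists>y. (h has_real_derivative y) (at x) \<and> 0 \<le> y" by auto
    qed
    moreover have "h 0 > 0" using init by (simp add: h_def)
    ultimately have "h t > 0" by linarith
    thus ?thesis unfolding h_def by (simp add: zero_less_mult_iff)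
  qed
  have cneg: "c \<le> 0"
  proof (rule ccontr)
    assume "\<not> c \<le> 0" hence c0: "c > 0" by simp
    have "\<forall>\<^sub>F t in at_top. SB t > 0" using order_tendstoD(1)[OF lc c0] .
    then obtain T1 where T1: "\<And>t. t \<ge> T1 \<Longrightarrow> SB t > 0" unfolding eventually_at_top_linorder by blast
    define T where "T = max T1 0"
    have "(SC T)\<^sup>2 > 0" using nzC by (simp add: T_def)
    from order_tendstoD(2)[OF lC2 this] obtain T2 where T2: "\<And>t. t \<ge> T2 \<Longrightarrow> (SC t)\<^sup>2 < (SC T)\<^sup>2"
      unfolding eventually_at_top_linorder by blast
    define t where "t = max T T2"
    have "(SC T)\<^sup>2 \<le> (SC t)\<^sup>2"
    proof (rule DERIV_nonneg_imp_nondecreasing[where f="\<lambda>t. (SC t)\<^sup>2"])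
      show "T \<le> t" by (simp add: t_def)
      fix x assume "T \<le> x" "x \<le> t"
      hence "SB x > 0" using T1 by (simp add: T_def)
      have "((\<lambda>t. (SC t)\<^sup>2) has_real_derivative 2 * SC x * (2 * sqrt 3 * SB x * SC x)) (at x)"
        by (intro derivative_eq_intros dC') auto
      moreover have "2 * SC x * (2 * sqrt 3 * SB x * SC x) = 4 * sqrt 3 * SB x * (SC x)\<^sup>2"
        by (simp add: power2_eq_square)
      moreover have "0 \<le> 4 * sqrt 3 * SB x * (SC x)\<^sup>2" using \<open>SB x > 0\<close> by simp
      ultimately show "\<exists>y. ((\<lambda>t. (SC t)\<^sup>2) has_real_derivative y) (at x) \<and> 0 \<le> y" by auto
    qed
    moreover have "(SC t)\<^sup>2 < (SC T)\<^sup>2" using T2 by (simp add: t_def)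
    ultimately show False by simp
  qed
  have apos: "3 * a + sqrt 3 * c \<ge> 0"
  proof (rule ccontr)
    assume "\<not> 3 * a + sqrt 3 * c \<ge> 0" hence c0: "3 * a + sqrt 3 * c < 0" by simp
    have "((\<lambda>t. 3 * Sp t + sqrt 3 * SB t) \<longlongrightarrow> 3 * a + sqrt 3 * c) at_top" by (intro tendsto_intros la lc)
    from order_tendstoD(2)[OF this c0]
    obtain T1 where T1: "\<And>t. t \<ge> T1 \<Longrightarrow> 3 * Sp t + sqrt 3 * SB t < 0" unfolding eventually_at_top_linorder by blast
    define T where "T = max T1 0"
    have "(SA T)\<^sup>2 > 0" using nzA by (simp add: T_def)
    from order_tendstoD(2)[OF lA2 this] obtain T2 where T2: "\<And>t. t \<ge> T2 \<Longrightarrow> (SA t)\<^sup>2 < (SA T)\<^sup>2"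
      unfolding eventually_at_top_linorder by blast
    define t where "t = max T T2"
    have "(SA T)\<^sup>2 \<le> (SA t)\<^sup>2"
    proof (rule DERIV_nonneg_imp_nondecreasing[where f="\<lambda>t. (SA t)\<^sup>2"])
      show "T \<le> t" by (simp add: t_def)
      fix x assume "T \<le> x" "x \<le> t"
      hence neg: "3 * Sp x + sqrt 3 * SB x < 0" using T1 by (simp add: T_def)
      have "((\<lambda>t. (SA t)\<^sup>2) has_real_derivative 2 * SA x * (- (3 * Sp x + sqrt 3 * SB x) * SA x)) (at x)"
        by (intro derivative_eq_intros dA') auto
      moreover have "2 * SA x * (- (3 * Sp x + sqrt 3 * SB x) * SA x) = (- 2 * (3 * Sp x + sqrt 3 * SB x)) * (SA x)\<^sup>2"
        by (simp add: power2_eq_square algebra_simps)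
      moreover have "0 \<le> - 2 * (3 * Sp x + sqrt 3 * SB x)" using neg by (simp add: algebra_simps)
      hence "0 \<le> (- 2 * (3 * Sp x + sqrt 3 * SB x)) * (SA x)\<^sup>2" by (rule mult_nonneg_nonneg) simp
      ultimately show "\<exists>y. ((\<lambda>t. (SA t)\<^sup>2) has_real_derivative y) (at x) \<and> 0 \<le> y" by auto
    qed
    moreover have "(SA t)\<^sup>2 < (SA T)\<^sup>2" using T2 by (simp add: t_def)
    ultimately show False by simp
  qed
  have arc: "(a, 0, c, 0) \<in> omega_arc"
  proof -
    have s0: "sqrt 3 > (0::real)" by simp
    have "sqrt 3 * (3 * a + sqrt 3 * c) \<ge> 0" using apos by simp
    hence h1: "- c \<le> sqrt 3 * a" by (simp add: algebra_simps)
    have "0 \<le> - c" using cneg by simp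
    hence "(-c)\<^sup>2 \<le> (sqrt 3 * a)\<^sup>2" using h1 by (intro power_mono) auto
    hence h2: "c\<^sup>2 \<le> 3 * a\<^sup>2" by (simp add: power_mult_distrib)
    have "0 \<le> sqrt 3 * a" using h1 cneg by linarith
    hence a0: "a \<ge> 0" using s0 by (simp add: zero_le_mult_iff)
    have q: "(1/2::real)\<^sup>2 = 1/4" by (simp add: power2_eq_square)
    have a4: "(1/2)\<^sup>2 \<le> a\<^sup>2" using h2 circ q by linarith
    hence ah: "1/2 \<le> a" using a0 by (simp add: abs_le_square_iff[symmetric])
    have "0 \<le> c\<^sup>2" by simp
    hence "a\<^sup>2 \<le> 1" using circ by linarith
    hence a1: "a \<le> 1" by (simp add: abs_square_le_1)
    have q2: "(sqrt 3 / 2)\<^sup>2 = (3/4::real)" by (simp add: power_divide)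
    have "c\<^sup>2 \<le> (sqrt 3 / 2)\<^sup>2" using circ a4 q q2 by linarith
    hence "\<bar>c\<bar> \<le> \<bar>sqrt 3 / 2\<bar>" by (simp only: abs_le_square_iff)
    hence "- (sqrt 3 / 2) \<le> c" by simp
    thus ?thesis using ah a1 cneg circ unfolding omega_arc_def by auto
  qed
  show ?thesis
  proof
    fix p assume "p \<in> omega_limit (\<lambda>t. (Sp t, SA t, SB t, SC t))"
    then obtain s :: "nat \<Rightarrow> real" where s: "filterlim s at_top sequentially"
      and lim: "(\<lambda>n. (Sp (s n), SA (s n), SB (s n), SC (s n))) \<longlonglongrightarrow> p"
      unfolding omega_limit_def by blast
    have "(\<lambda>n. (Sp (s n), SA (s n), SB (s n), SC (s n))) \<longlonglongrightarrow> (a, 0, c, 0)"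
      by (intro tendsto_Pair filterlim_compose[OF la s] filterlim_compose[OF lA s]
          filterlim_compose[OF lc s] filterlim_compose[OF lC s])
    hence "p = (a, 0, c, 0)" using lim LIMSEQ_unique by blast
    thus "p \<in> omega_arc" using arc by simp
  qed
qed


theorem mainTheorem5:
  fixes Sp SA SB SC :: "real \<Rightarrow> real"
  assumes sol: "kasner_solution Sp SA SB SC"
    and sphere: "(Sp 0)\<^sup>2 + (SA 0)\<^sup>2 + (SB 0)\<^sup>2 + (SC 0)\<^sup>2 = 1"
    and init: "SA 0 * SC 0 \<noteq> 0"
  shows "alpha_limit (\<lambda>t. (Sp t, SA t, SB t, SC t)) \<subseteq> alpha_arc
       \<and> omega_limit (\<lambda>t. (Sp t, SA t, SB t, SC t)) \<subseteq> omega_arc"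
proof
  show "omega_limit (\<lambda>t. (Sp t, SA t, SB t, SC t)) \<subseteq> omega_arc"
    by (rule omega_part[OF sol sphere init])
  note d = sol[unfolded kasner_solution_def, rule_format]
  define P where "P t = - Sp (- t)" for t
  define A where "A t = SA (- t)" for t
  define B where "B t = - SB (- t)" for t
  define C where "C t = SC (- t)" for t
  have solr: "kasner_solution P A B C"
    unfolding kasner_solution_def
  proof (intro allI conjI)
    fix t
    have m: "\<And>f y. (f has_real_derivative y) (at (- t)) \<Longrightarrow> ((\<lambda>x. f (- x)) has_real_derivative - y) (at t)"
      using DERIV_mirror by blast
    have "((\<lambda>x. Sp (- x)) has_real_derivative - (3 * (SA (-t))\<^sup>2)) (at t)" using m d by blast
    from DERIV_minus[OF this] show "(P has_real_derivative 3 * (A t)\<^sup>2) (at t)"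
      by (simp add: P_def[abs_def] A_def)
    have "((\<lambda>x. SA (- x)) has_real_derivative - (- (3 * Sp (-t) + sqrt 3 * SB (-t)) * SA (-t))) (at t)"
      using m d by blast
    moreover have "- (- (3 * Sp (-t) + sqrt 3 * SB (-t)) * SA (-t)) = - (3 * P t + sqrt 3 * B t) * A t"
      by (simp add: P_def A_def B_def algebra_simps)
    ultimately show "(A has_real_derivative - (3 * P t + sqrt 3 * B t) * A t) (at t)"
      by (simp add: A_def[abs_def])
    have "((\<lambda>x. SB (- x)) has_real_derivative - (sqrt 3 * (SA (-t))\<^sup>2 - 2 * sqrt 3 * (SC (-t))\<^sup>2)) (at t)"
      using m d by blast
    from DERIV_minus[OF this] show "(B has_real_derivative sqrt 3 * (A t)\<^sup>2 - 2 * sqrt 3 * (C t)\<^sup>2) (at t)"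
      by (simp add: B_def[abs_def] A_def C_def)
    have "((\<lambda>x. SC (- x)) has_real_derivative - (2 * sqrt 3 * SB (-t) * SC (-t))) (at t)"
      using m d by blast
    thus "(C has_real_derivative 2 * sqrt 3 * B t * C t) (at t)"
      by (simp add: C_def[abs_def] B_def)
  qed
  have sphr: "(P 0)\<^sup>2 + (A 0)\<^sup>2 + (B 0)\<^sup>2 + (C 0)\<^sup>2 = 1" using sphere by (simp add: P_def A_def B_def C_def)
  have initr: "A 0 * C 0 \<noteq> 0" using init by (simp add: A_def C_def)
  have om: "omega_limit (\<lambda>t. (P t, A t, B t, C t)) \<subseteq> omega_arc"
    by (rule omega_part[OF solr sphr initr])
  show "alpha_limit (\<lambda>t. (Sp t, SA t, SB t, SC t)) \<subseteq> alpha_arc"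
  proof
    fix q assume "q \<in> alpha_limit (\<lambda>t. (Sp t, SA t, SB t, SC t))"
    then obtain s :: "nat \<Rightarrow> real" where s: "filterlim s at_bot sequentially"
      and lim: "(\<lambda>n. (Sp (s n), SA (s n), SB (s n), SC (s n))) \<longlonglongrightarrow> q"
      unfolding alpha_limit_def by blast
    obtain q1 q2 q3 q4 where q: "q = (q1, q2, q3, q4)" by (cases q) auto
    have l1: "(\<lambda>n. Sp (s n)) \<longlonglongrightarrow> q1" using tendsto_fst[OF lim] by (simp add: q)
    have l2: "(\<lambda>n. SA (s n)) \<longlonglongrightarrow> q2" using tendsto_fst[OF tendsto_snd[OF lim]] by (simp add: q)
    have l3: "(\<lambda>n. SB (s n)) \<longlonglongrightarrow> q3" using tendsto_fst[OF tendsto_snd[OF tendsto_snd[OF lim]]] by (simp add: q)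
    have l4: "(\<lambda>n. SC (s n)) \<longlonglongrightarrow> q4" using tendsto_snd[OF tendsto_snd[OF tendsto_snd[OF lim]]] by (simp add: q)
    have r: "filterlim (\<lambda>n. - s n) at_top sequentially"
      using s by (simp add: filterlim_uminus_at_top)
    have "(\<lambda>n. (P (- s n), A (- s n), B (- s n), C (- s n))) \<longlonglongrightarrow> (- q1, q2, - q3, q4)"
      unfolding P_def A_def B_def C_def by (simp add: tendsto_Pair tendsto_minus l1 l2 l3 l4)
    hence "(- q1, q2, - q3, q4) \<in> omega_limit (\<lambda>t. (P t, A t, B t, C t))"
      unfolding omega_limit_def using r by blast
    hence "(- q1, q2, - q3, q4) \<in> omega_arc" using om by blast
    thus "q \<in> alpha_arc" unfolding q omega_arc_def alpha_arc_def by auto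
  qed
qed

end
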